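(* There is a one-to-one correspondence between the set of permutations with no $\eta$-inactive sites and the set of primitive ascent sequences.
   Context: For a permutation $\pi$ of $[n]$ and $i\in[n]$, let $J(i)=0$ if $\pi(i)=1$ and otherwise let $J(i)$ be the index with $\pi(J(i))=\pi(i)-1$. The sites of $\pi$ are the site before $\pi(1)$ and the site after $\pi(i)$ for each $i\in[n]$. The site before $\pi(1)$ is $\eta$-active; the site after $\pi(i)$ is $\eta$-active iff $J(i)<i$, or $i<n$ and $\pi(i)<\pi(i+1)$. A site that is not $\eta$-active is $\eta$-inactive. An ascent sequence of length $n$ is a sequence $x(1)\cdots x(n)$ of positive integers with $x(1)=1$ and $x(i+1)\le 2+\mathrm{asc}(x(1)\cdots x(i))$ for each $i\in[n-1]$, where $\mathrm{asc}(w)$ is the number of indices $k$ with $w(k)<w(k+1)$. An ascent sequence is primitive if it has no flat step, i.e. no $i$ with $x(i)=x(i+1)$. *)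

theory Defs
  imports "HOL-Combinatorics.Permutations"
begin

definition J :: "(nat \<Rightarrow> nat) \<Rightarrow> nat \<Rightarrow> nat \<Rightarrow> nat" where
  "J p n i = (if p i = 1 then 0 else (THE j. j \<in> {1..n} \<and> p j = p i - 1))"

definition eta_active_after :: "(nat \<Rightarrow> nat) \<Rightarrow> nat \<Rightarrow> nat \<Rightarrow> bool" where
  "eta_active_after p n i \<longleftrightarrow> J p n i < i \<or> (i < n \<and> p i < p (i + 1))"

text \<open>No eta-inactive site: the site before p(1) is always active, so it suffices
  that every site after p(i), i in [n], is active.\<close>
definition no_eta_inactive :: "(nat \<Rightarrow> nat) \<Rightarrow> nat \<Rightarrow> bool" where
  "no_eta_inactive p n \<longleftrightarrow> (\<forall>i\<in>{1..n}. eta_active_after p n i)"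

definition perms_no_inactive :: "nat \<Rightarrow> (nat \<Rightarrow> nat) set" where
  "perms_no_inactive n = {p. p permutes {1..n} \<and> no_eta_inactive p n}"

text \<open>Sequences are lists; the paper's x(k) is x ! (k - 1).\<close>
definition asc :: "nat list \<Rightarrow> nat" where
  "asc w = card {k. k + 1 < length w \<and> w ! k < w ! (k + 1)}"

definition ascent_seq :: "nat list \<Rightarrow> bool" where
  "ascent_seq x \<longleftrightarrow> x \<noteq> [] \<and> x ! 0 = 1 \<and> (\<forall>k < length x. 1 \<le> x ! k) \<and>
     (\<forall>i. i + 1 < length x \<longrightarrow> x ! (i + 1) \<le> 2 + asc (take (i + 1) x))"

definition primitive :: "nat list \<Rightarrow> bool" where
  "primitive x \<longleftrightarrow> (\<forall>i. i + 1 < length x \<longrightarrow> x ! i \<noteq> x ! (i + 1))"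

definition prim_ascent_seqs :: "nat \<Rightarrow> nat list set" where
  "prim_ascent_seqs n = {x. length x = n \<and> ascent_seq x \<and> primitive x}"

end

theory Submission
  imports Defs
begin


lemma tree_iso:
  fixes S :: "nat \<Rightarrow> 'a set" and T :: "nat \<Rightarrow> 'b set"
  assumes SA: "\<And>n x. 1 \<le> n \<Longrightarrow> x \<in> S (Suc n) \<Longrightarrow> pS n x \<in> S n \<and> iS n x \<le> fst (LS n (pS n x)) \<and> LS (Suc n) x = st (LS n (pS n x)) (iS n x)"
  and SB: "\<And>n y j. 1 \<le> n \<Longrightarrow> y \<in> S n \<Longrightarrow> j \<le> fst (LS n y) \<Longrightarrow> \<exists>!x. x \<in> S (Suc n) \<and> pS n x = y \<and> iS n x = j"
  and TA: "\<And>n x. 1 \<le> n \<Longrightarrow> x \<in> T (Suc n) \<Longrightarrow> pT n x \<in> T n \<and> iT n x \<le> fst (LT n (pT n x)) \<and> LT (Suc n) x = st (LT n (pT n x)) (iT n x)"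
  and TB: "\<And>n y j. 1 \<le> n \<Longrightarrow> y \<in> T n \<Longrightarrow> j \<le> fst (LT n y) \<Longrightarrow> \<exists>!x. x \<in> T (Suc n) \<and> pT n x = y \<and> iT n x = j"
  and base: "bij_betw g0 (S 1) (T 1)" "\<forall>x\<in>S 1. LT 1 (g0 x) = LS 1 x"
  and n: "1 \<le> n"
  shows "\<exists>g. bij_betw g (S n) (T n) \<and> (\<forall>x\<in>S n. LT n (g x) = LS n x)"
  using n
proof (induction n rule: dec_induct)
  case base
  then show ?case using assms(5,6) by blast
next
  case (step n)
  then obtain g where g: "bij_betw g (S n) (T n)" "\<forall>x\<in>S n. LT n (g x) = LS n x" by blast
  define h where "h x = (THE z. z \<in> T (Suc n) \<and> pT n z = g (pS n x) \<and> iT n z = iS n x)" for x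
  have hx: "h x \<in> T (Suc n) \<and> pT n (h x) = g (pS n x) \<and> iT n (h x) = iS n x" if x: "x \<in> S (Suc n)" for x
  proof -
    from SA[OF step(1) x] have a: "pS n x \<in> S n" "iS n x \<le> fst (LS n (pS n x))" by auto
    have g1: "g (pS n x) \<in> T n" using bij_betw_apply[OF g(1) a(1)] .
    have g2: "iS n x \<le> fst (LT n (g (pS n x)))" using a g(2) by simp
    have "\<exists>!z. z \<in> T (Suc n) \<and> pT n z = g (pS n x) \<and> iT n z = iS n x"
      using TB[OF step(1) g1 g2] .
    then show ?thesis unfolding h_def by (rule theI')
  qed
  have inj: "inj_on h (S (Suc n))"
  proof (rule inj_onI)
    fix x1 x2 assume x: "x1 \<in> S (Suc n)" "x2 \<in> S (Suc n)" "h x1 = h x2"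
    have p: "pS n x1 \<in> S n" "pS n x2 \<in> S n" using SA[OF step(1) x(1)] SA[OF step(1) x(2)] by auto
    have "g (pS n x1) = g (pS n x2)" using hx[OF x(1)] hx[OF x(2)] x(3) by simp
    then have pe: "pS n x1 = pS n x2" using g(1) p unfolding bij_betw_def inj_on_def by simp
    have ie: "iS n x1 = iS n x2" using hx[OF x(1)] hx[OF x(2)] x(3) by simp
    have "iS n x1 \<le> fst (LS n (pS n x1))" using SA[OF step(1) x(1)] by simp
    then have u: "\<exists>!x. x \<in> S (Suc n) \<and> pS n x = pS n x1 \<and> iS n x = iS n x1"
      using SB[OF step(1) p(1)] by simp
    have e1: "(THE x. x \<in> S (Suc n) \<and> pS n x = pS n x1 \<and> iS n x = iS n x1) = x1"
      by (rule the1_equality[OF u]) (simp add: x(1))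
    have e2: "(THE x. x \<in> S (Suc n) \<and> pS n x = pS n x1 \<and> iS n x = iS n x1) = x2"
      by (rule the1_equality[OF u]) (simp add: x(2) pe ie)
    show "x1 = x2" using e1 e2 by simp
  qed
  have surj: "h ` S (Suc n) = T (Suc n)"
  proof
    show "h ` S (Suc n) \<subseteq> T (Suc n)" using hx by auto
  next
    show "T (Suc n) \<subseteq> h ` S (Suc n)"
    proof
      fix z assume z: "z \<in> T (Suc n)"
      from TA[OF step(1) z] have a: "pT n z \<in> T n" "iT n z \<le> fst (LT n (pT n z))" by auto
      define y' where "y' = inv_into (S n) g (pT n z)"
      have y': "y' \<in> S n" "g y' = pT n z" using a g(1) unfolding y'_def
        by (auto simp: bij_betw_def inv_into_into f_inv_into_f)
      have "iT n z \<le> fst (LS n y')" using a(2) y'(2) g(2)[rule_format, OF y'(1)] by simp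
      then have "\<exists>x. x \<in> S (Suc n) \<and> pS n x = y' \<and> iS n x = iT n z"
        using ex1_implies_ex[OF SB[OF step(1) y'(1)]] by simp
      then obtain x where x: "x \<in> S (Suc n)" "pS n x = y'" "iS n x = iT n z" by (elim exE conjE)
      have u: "\<exists>!w. w \<in> T (Suc n) \<and> pT n w = g (pS n x) \<and> iT n w = iS n x"
        using TB[OF step(1) a(1) a(2)] x y' by simp
      have "h x = z" unfolding h_def
        by (rule the1_equality[OF u]) (simp add: z x y')
      then show "z \<in> h ` S (Suc n)" using x(1) by (intro image_eqI) simp_all
    qed
  qed
  have lab: "\<forall>x\<in>S (Suc n). LT (Suc n) (h x) = LS (Suc n) x"
  proof
    fix x assume x: "x \<in> S (Suc n)"
    have p: "pS n x \<in> S n" using SA[OF step(1) x] by auto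
    have "LT (Suc n) (h x) = st (LT n (pT n (h x))) (iT n (h x))" using TA[OF step(1)] hx[OF x] by blast
    also have "\<dots> = st (LS n (pS n x)) (iS n x)" using hx[OF x] g(2) p by simp
    also have "\<dots> = LS (Suc n) x" using SA[OF step(1) x] by simp
    finally show "LT (Suc n) (h x) = LS (Suc n) x" .
  qed
  show ?case using inj surj lab unfolding bij_betw_def by blast
qed


lemma asc_snoc: "w \<noteq> [] \<Longrightarrow> asc (w @ [v]) = asc w + (if last w < v then 1 else 0)"
proof -
  assume w: "w \<noteq> []"
  let ?A = "{k. k + 1 < length w \<and> w ! k < w ! (k + 1)}"
  let ?B = "{k. k + 1 = length w \<and> last w < v}"
  have eq: "{k. k + 1 < length (w@[v]) \<and> (w@[v]) ! k < (w@[v]) ! (k + 1)} = ?A \<union> ?B"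
  proof (rule set_eqI)
    fix k
    show "k \<in> {k. k + 1 < length (w@[v]) \<and> (w@[v]) ! k < (w@[v]) ! (k + 1)} \<longleftrightarrow> k \<in> ?A \<union> ?B"
    proof (cases "k + 1 < length w")
      case True
      then show ?thesis by (auto simp: nth_append)
    next
      case False
      show ?thesis
      proof (cases "k + 1 = length w")
        case True
        then have kk: "k = length w - 1" by simp
        show ?thesis using w True unfolding kk by (auto simp: nth_append last_conv_nth)
      next
        case F2: False
        then show ?thesis using False by auto
      qed
    qed
  qed
  have fA: "finite ?A" by (rule finite_subset[of _ "{..<length w}"]) auto
  have B: "?B = (if last w < v then {length w - 1} else {})" using w by (auto)
  have "card (?A \<union> ?B) = card ?A + card ?B"
    by (rule card_Un_disjoint) (use fA B in auto)
  then show ?thesis unfolding asc_def eq using B by simp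
qed

lemma ascent_seq_snoc:
  assumes y: "y \<noteq> []"
  shows "ascent_seq (y @ [v]) \<longleftrightarrow> ascent_seq y \<and> 1 \<le> v \<and> v \<le> 2 + asc y"
proof -
  have h0: "(y @ [v]) ! 0 = y ! 0" using y by (simp add: nth_append)
  have h1: "(\<forall>k < length (y@[v]). 1 \<le> (y@[v]) ! k) \<longleftrightarrow> (\<forall>k < length y. 1 \<le> y ! k) \<and> 1 \<le> v"
    by (auto simp: nth_append less_Suc_eq)
  have h2: "(\<forall>i. i + 1 < length (y@[v]) \<longrightarrow> (y@[v]) ! (i + 1) \<le> 2 + asc (take (i + 1) (y@[v])))
      \<longleftrightarrow> (\<forall>i. i + 1 < length y \<longrightarrow> y ! (i + 1) \<le> 2 + asc (take (i + 1) y)) \<and> v \<le> 2 + asc y"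
  proof -
    have a: "(y@[v]) ! (i + 1) \<le> 2 + asc (take (i + 1) (y@[v])) \<longleftrightarrow> y ! (i + 1) \<le> 2 + asc (take (i + 1) y)"
      if "i + 1 < length y" for i using that by (simp add: nth_append)
    have b: "(y@[v]) ! (i + 1) \<le> 2 + asc (take (i + 1) (y@[v])) \<longleftrightarrow> v \<le> 2 + asc y"
      if "i + 1 = length y" for i using that by (simp add: nth_append)
    have c: "(i + 1 < length (y@[v])) \<longleftrightarrow> i + 1 < length y \<or> i + 1 = length y" for i by auto
    show ?thesis
    proof
      assume H: "\<forall>i. i + 1 < length (y@[v]) \<longrightarrow> (y@[v]) ! (i + 1) \<le> 2 + asc (take (i + 1) (y@[v]))"
      have "v \<le> 2 + asc y" using H[rule_format, of "length y - 1"] b[of "length y - 1"] y by simp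
      then show "(\<forall>i. i + 1 < length y \<longrightarrow> y ! (i + 1) \<le> 2 + asc (take (i + 1) y)) \<and> v \<le> 2 + asc y"
        using H a c by blast
    next
      assume "(\<forall>i. i + 1 < length y \<longrightarrow> y ! (i + 1) \<le> 2 + asc (take (i + 1) y)) \<and> v \<le> 2 + asc y"
      then show "\<forall>i. i + 1 < length (y@[v]) \<longrightarrow> (y@[v]) ! (i + 1) \<le> 2 + asc (take (i + 1) (y@[v]))"
        using a b c by metis
    qed
  qed
  show ?thesis unfolding ascent_seq_def using h0 h1 h2 y by auto
qed

lemma primitive_snoc:
  assumes y: "y \<noteq> []"
  shows "primitive (y @ [v]) \<longleftrightarrow> primitive y \<and> last y \<noteq> v"
proof -
  have c: "(i + 1 < length (y@[v])) \<longleftrightarrow> i + 1 < length y \<or> i + 1 = length y" for i by auto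
  have a: "(y@[v]) ! i \<noteq> (y@[v]) ! (i + 1) \<longleftrightarrow> y ! i \<noteq> y ! (i + 1)" if "i + 1 < length y" for i
    using that by (simp add: nth_append)
  have b: "(y@[v]) ! i \<noteq> (y@[v]) ! (i + 1) \<longleftrightarrow> last y \<noteq> v" if "i + 1 = length y" for i
  proof -
    have ii: "i = length y - 1" using that by simp
    show ?thesis using that y unfolding ii by (simp add: nth_append last_conv_nth)
  qed
  show ?thesis unfolding primitive_def
  proof
    assume H: "\<forall>i. i + 1 < length (y @ [v]) \<longrightarrow> (y @ [v]) ! i \<noteq> (y @ [v]) ! (i + 1)"
    have "last y \<noteq> v" using H[rule_format, of "length y - 1"] b[of "length y - 1"] y by simp
    then show "(\<forall>i. i + 1 < length y \<longrightarrow> y ! i \<noteq> y ! (i + 1)) \<and> last y \<noteq> v" using H a c by blast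
  next
    assume "(\<forall>i. i + 1 < length y \<longrightarrow> y ! i \<noteq> y ! (i + 1)) \<and> last y \<noteq> v"
    then show "\<forall>i. i + 1 < length (y @ [v]) \<longrightarrow> (y @ [v]) ! i \<noteq> (y @ [v]) ! (i + 1)"
      using a b c by metis
  qed
qed

lemma prim_snoc:
  assumes y: "y \<noteq> []"
  shows "y @ [v] \<in> prim_ascent_seqs (Suc n) \<longleftrightarrow> y \<in> prim_ascent_seqs n \<and> 1 \<le> v \<and> v \<le> 2 + asc y \<and> v \<noteq> last y"
  using ascent_seq_snoc[OF y] primitive_snoc[OF y] unfolding prim_ascent_seqs_def by auto

lemma last_le_asc:
  assumes x: "ascent_seq x" and k: "k < length x"
  shows "x ! k \<le> asc (take (Suc k) x) + 1"
  using k
proof (induction k)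
  case 0
  then show ?case using x unfolding ascent_seq_def by simp
next
  case (Suc k)
  have t: "take (Suc (Suc k)) x = take (Suc k) x @ [x ! Suc k]" using Suc.prems by (simp add: take_Suc_conv_app_nth)
  have ne: "take (Suc k) x \<noteq> []" using Suc.prems by (cases x) auto
  have xne: "x \<noteq> []" using Suc.prems by auto
  have l: "last (take (Suc k) x) = x ! k" using Suc.prems xne by (simp add: last_conv_nth min_def)
  have IH: "x ! k \<le> asc (take (Suc k) x) + 1" using Suc by simp
  have bnd: "x ! Suc k \<le> 2 + asc (take (Suc k) x)" using x Suc.prems unfolding ascent_seq_def by auto
  show ?case unfolding t using asc_snoc[OF ne, of "x ! Suc k"] l IH bnd
    by (auto split: if_splits)
qed

lemma prim_last_le:
  assumes "y \<in> prim_ascent_seqs n"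
  shows "last y \<le> asc y + 1"
proof -
  have y: "ascent_seq y" "length y = n" "y \<noteq> []" using assms unfolding prim_ascent_seqs_def ascent_seq_def by auto
  have nn: "n - 1 < n" using y by (cases n) auto
  have "y ! (n - 1) \<le> asc (take (Suc (n - 1)) y) + 1" using last_le_asc[OF y(1), of "n - 1"] y nn by simp
  then show ?thesis using y by (simp add: last_conv_nth)
qed


definition stp :: "nat \<times> nat \<Rightarrow> nat \<Rightarrow> nat \<times> nat" where
  "stp l j = (if snd l \<le> j then (Suc (fst l), Suc j) else (fst l, j))"

definition LTs :: "nat \<Rightarrow> nat list \<Rightarrow> nat \<times> nat" where "LTs n x = (asc x, last x - 1)"
definition pTs :: "nat \<Rightarrow> nat list \<Rightarrow> nat list" where "pTs n x = butlast x"
definition iTs :: "nat \<Rightarrow> nat list \<Rightarrow> nat" where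
  "iTs n x = (if last x < last (butlast x) then last x - 1 else last x - 2)"

lemma prim_last_ge: "y \<in> prim_ascent_seqs n \<Longrightarrow> y \<noteq> [] \<Longrightarrow> 1 \<le> last y"
  unfolding prim_ascent_seqs_def ascent_seq_def by (auto simp: last_conv_nth)

lemma seqA:
  assumes n: "1 \<le> n" and x: "x \<in> prim_ascent_seqs (Suc n)"
  shows "pTs n x \<in> prim_ascent_seqs n \<and> iTs n x \<le> fst (LTs n (pTs n x)) \<and> LTs (Suc n) x = stp (LTs n (pTs n x)) (iTs n x)"
proof -
  have lx: "length x = Suc n" using x unfolding prim_ascent_seqs_def by auto
  define y where "y = butlast x"
  define v where "v = last x"
  have xe: "x = y @ [v]" using lx unfolding y_def v_def by (metis append_butlast_last_id list.size(3) nat.simps(3))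
  have ly: "length y = n" using lx unfolding y_def by simp
  have yne: "y \<noteq> []" using ly n by auto
  have c: "y \<in> prim_ascent_seqs n" "1 \<le> v" "v \<le> 2 + asc y" "v \<noteq> last y"
    using prim_snoc[OF yne, of v n] x xe by auto
  have l1: "last y \<le> asc y + 1" using prim_last_le[OF c(1)] .
  have l2: "1 \<le> last y" using prim_last_ge[OF c(1) yne] .
  have as: "asc x = asc y + (if last y < v then 1 else 0)" using asc_snoc[OF yne] xe by simp
  have i: "iTs n x = (if v < last y then v - 1 else v - 2)" unfolding iTs_def y_def v_def by simp
  show ?thesis unfolding pTs_def y_def[symmetric] LTs_def stp_def i as
    using c l1 l2 xe by auto
qed

lemma seqB:
  assumes n: "1 \<le> n" and y: "y \<in> prim_ascent_seqs n" and j: "j \<le> fst (LTs n y)"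
  shows "\<exists>!x. x \<in> prim_ascent_seqs (Suc n) \<and> pTs n x = y \<and> iTs n x = j"
proof -
  have ly: "length y = n" using y unfolding prim_ascent_seqs_def by auto
  have yne: "y \<noteq> []" using ly n by auto
  have l1: "last y \<le> asc y + 1" using prim_last_le[OF y] .
  have l2: "1 \<le> last y" using prim_last_ge[OF y yne] .
  have ja: "j \<le> asc y" using j unfolding LTs_def by simp
  define v where "v = (if j + 1 < last y then j + 1 else j + 2)"
  have ex: "y @ [v] \<in> prim_ascent_seqs (Suc n) \<and> pTs n (y @ [v]) = y \<and> iTs n (y @ [v]) = j"
    using prim_snoc[OF yne, of v n] y ja l1 l2 unfolding v_def pTs_def iTs_def by auto
  have un: "x = y @ [v]" if x: "x \<in> prim_ascent_seqs (Suc n) \<and> pTs n x = y \<and> iTs n x = j" for x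
  proof -
    have lx: "length x = Suc n" using x unfolding prim_ascent_seqs_def by auto
    define w where "w = last x"
    have xe: "x = y @ [w]" using lx x unfolding pTs_def w_def by (metis append_butlast_last_id list.size(3) nat.simps(3))
    have xin: "y @ [w] \<in> prim_ascent_seqs (Suc n)" using x xe by simp
    have c: "1 \<le> w" "w \<le> 2 + asc y" "w \<noteq> last y"
      using prim_snoc[OF yne, of w n] xin by auto
    have ij: "iTs n x = j" using x by simp
    have "iTs n (y @ [w]) = j" using ij unfolding xe[symmetric] .
    moreover have lw: "last (y @ [w]) = w" "butlast (y @ [w]) = y" by simp_all
    moreover have "iTs n (y @ [w]) = (if w < last y then w - 1 else w - 2)" unfolding iTs_def lw by (rule refl)
    ultimately have "j = (if w < last y then w - 1 else w - 2)" by simp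
    then have "w = v" using c l2 unfolding v_def by auto
    then show ?thesis using xe by simp
  qed
  show ?thesis using ex un by blast
qed


definition plf :: "(nat \<Rightarrow> nat) \<Rightarrow> nat \<Rightarrow> bool" where
  "plf p i \<longleftrightarrow> p i = 1 \<or> (\<exists>j\<in>{1..<i}. p j + 1 = p i)"

definition noin :: "(nat \<Rightarrow> nat) \<Rightarrow> nat \<Rightarrow> bool" where
  "noin p m \<longleftrightarrow> (\<forall>i\<in>{1..m}. plf p i \<or> (i < m \<and> p i < p (Suc i)))"

lemma J_iff:
  assumes p: "p permutes {1..m}" and i: "i \<in> {1..m}"
  shows "J p m i < i \<longleftrightarrow> plf p i"
proof (cases "p i = 1")
  case True
  then show ?thesis using i unfolding J_def plf_def by auto
next
  case False
  have pi: "p i \<in> {1..m}" using i permutes_in_image[OF p] by blast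
  then have w: "p i - 1 \<in> {1..m}" using False by auto
  then obtain j0 where j0: "j0 \<in> {1..m}" "p j0 = p i - 1"
    using permutes_image[OF p] by (metis imageE)
  have inj: "inj p" using permutes_inj[OF p] .
  have u: "j = j0" if "p j = p i - 1" for j
  proof -
    have "p j = p j0" using that j0(2) by simp
    then show "j = j0" by (rule injD[OF inj])
  qed
  have the: "(THE j. j \<in> {1..m} \<and> p j = p i - 1) = j0"
  proof (rule the_equality)
    show "j0 \<in> {1..m} \<and> p j0 = p i - 1" using j0 by simp
  next
    fix j assume "j \<in> {1..m} \<and> p j = p i - 1"
    then have "p j = p i - 1" by simp
    then show "j = j0" by (rule u)
  qed
  have J: "J p m i = j0" unfolding J_def using False the by simp
  show ?thesis
  proof
    assume "J p m i < i"
    then have "j0 \<in> {1..<i}" "p j0 + 1 = p i" using J j0 False pi by auto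
    then show "plf p i" unfolding plf_def by blast
  next
    assume "plf p i"
    then obtain j where jj: "j \<in> {1..<i}" "p j + 1 = p i" using False unfolding plf_def by blast
    then have "p j = p i - 1" by simp
    then have "j = j0" by (rule u)
    then show "J p m i < i" using J jj(1) by simp
  qed
qed

lemma noin_iff:
  assumes p: "p permutes {1..m}"
  shows "no_eta_inactive p m \<longleftrightarrow> noin p m"
  unfolding no_eta_inactive_def noin_def eta_active_after_def using J_iff[OF p] by simp

lemma perms_eq: "perms_no_inactive n = {p. p permutes {1..n} \<and> noin p n}"
  unfolding perms_no_inactive_def using noin_iff by blast

definition sh :: "nat \<Rightarrow> nat \<Rightarrow> nat" where "sh v u = (if v \<le> u then Suc u else u)"

definition app :: "nat \<Rightarrow> (nat \<Rightarrow> nat) \<Rightarrow> nat \<Rightarrow> nat \<Rightarrow> nat" where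
  "app n q v = (\<lambda>i. if i \<in> {1..n} then sh v (q i) else if i = Suc n then v else i)"

definition par :: "nat \<Rightarrow> (nat \<Rightarrow> nat) \<Rightarrow> nat \<Rightarrow> nat" where
  "par n p = (\<lambda>i. if i \<in> {1..n} then (if p (Suc n) < p i then p i - 1 else p i) else i)"

lemma sh_lt[simp]: "sh v a < sh v b \<longleftrightarrow> a < b" by (simp add: sh_def)
lemma sh_lt_v[simp]: "sh v a < v \<longleftrightarrow> a < v" by (simp add: sh_def)
lemma sh_eq[simp]: "sh v a = sh v b \<longleftrightarrow> a = b" by (auto simp add: sh_def)
lemma sh_neq_v: "sh v a \<noteq> v" by (simp add: sh_def)
lemma sh_one: "1 \<le> a \<Longrightarrow> 1 \<le> v \<Longrightarrow> sh v a = 1 \<longleftrightarrow> a = 1 \<and> v \<noteq> 1" by (auto simp add: sh_def)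
lemma sh_pred: "sh v a + 1 = sh v b \<longleftrightarrow> a + 1 = b \<and> b \<noteq> v" by (auto simp add: sh_def)

lemma app_in[simp]: "i \<in> {1..n} \<Longrightarrow> app n q v i = sh v (q i)" by (simp add: app_def)
lemma app_last[simp]: "app n q v (Suc n) = v" by (simp add: app_def)

lemma app_permutes:
  assumes q: "q permutes {1..n}" and v: "v \<in> {1..Suc n}"
  shows "app n q v permutes {1..Suc n}"
proof (rule bij_imp_permutes)
  have qi: "q i \<in> {1..n}" if "i \<in> {1..n}" for i using that permutes_in_image[OF q] by blast
  have img: "app n q v ` {1..Suc n} \<subseteq> {1..Suc n}"
  proof
    fix y assume "y \<in> app n q v ` {1..Suc n}"
    then obtain i where i: "i \<in> {1..Suc n}" "y = app n q v i" by blast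
    show "y \<in> {1..Suc n}"
    proof (cases "i = Suc n")
      case True then show ?thesis using i v by simp
    next
      case False
      then have "i \<in> {1..n}" using i by auto
      then show ?thesis using i qi[of i] by (auto simp: sh_def)
    qed
  qed
  have inj: "inj_on (app n q v) {1..Suc n}"
  proof (rule inj_onI)
    fix i k assume ik: "i \<in> {1..Suc n}" "k \<in> {1..Suc n}" "app n q v i = app n q v k"
    have injq: "inj q" using permutes_inj[OF q] .
    show "i = k"
    proof (cases "i = Suc n"; cases "k = Suc n")
      assume "i \<noteq> Suc n" "k \<noteq> Suc n"
      then have "i \<in> {1..n}" "k \<in> {1..n}" using ik by auto
      then show ?thesis using ik injq by (simp add: injD)
    next
      assume "i = Suc n" "k \<noteq> Suc n"
      then have "k \<in> {1..n}" using ik by auto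
      then show ?thesis using ik(3) \<open>i = Suc n\<close> sh_neq_v[of v "q k"] by simp
    next
      assume "i \<noteq> Suc n" "k = Suc n"
      then have "i \<in> {1..n}" using ik by auto
      then show ?thesis using ik(3) \<open>k = Suc n\<close> sh_neq_v[of v "q i"] by simp
    qed simp
  qed
  show "bij_betw (app n q v) {1..Suc n} {1..Suc n}"
    unfolding bij_betw_def using inj img endo_inj_surj[OF _ img inj] by simp
next
  fix x assume "x \<notin> {1..Suc n}"
  then show "app n q v x = x" unfolding app_def by auto
qed

lemma par_app:
  assumes q: "q permutes {1..n}"
  shows "par n (app n q v) = q"
proof
  fix i
  show "par n (app n q v) i = q i"
  proof (cases "i \<in> {1..n}")
    case True
    then show ?thesis unfolding par_def by (auto simp: sh_def)
  next
    case False
    then show ?thesis using permutes_not_in[OF q False] by (simp add: par_def del: atLeastAtMost_iff)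
  qed
qed

lemma par_props:
  assumes p: "p permutes {1..Suc n}"
  shows "par n p permutes {1..n}" "p (Suc n) \<in> {1..Suc n}" "app n (par n p) (p (Suc n)) = p"
proof -
  show v: "p (Suc n) \<in> {1..Suc n}" using permutes_in_image[OF p] by simp
  have injp: "inj p" using permutes_inj[OF p] .
  have ne: "p i \<noteq> p (Suc n)" if "i \<in> {1..n}" for i
  proof -
    have "i \<noteq> Suc n" using that by auto
    then show ?thesis using injD[OF injp, of i "Suc n"] by auto
  qed
  have pi: "p i \<in> {1..Suc n}" if "i \<in> {1..n}" for i using that permutes_in_image[OF p] by auto
  show "par n p permutes {1..n}"
  proof (rule bij_imp_permutes)
    have img: "par n p ` {1..n} \<subseteq> {1..n}"
    proof
      fix y assume "y \<in> par n p ` {1..n}"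
      then obtain i where i: "i \<in> {1..n}" "y = par n p i" by blast
      show "y \<in> {1..n}" using i ne[OF i(1)] pi[OF i(1)] v unfolding par_def by auto
    qed
    have inj: "inj_on (par n p) {1..n}"
    proof (rule inj_onI)
      fix i k assume ik: "i \<in> {1..n}" "k \<in> {1..n}" "par n p i = par n p k"
      have "p i = p k" using ik ne[OF ik(1)] ne[OF ik(2)] pi[OF ik(1)] pi[OF ik(2)] unfolding par_def
        by (auto split: if_splits)
      then show "i = k" using injp by (simp add: injD)
    qed
    show "bij_betw (par n p) {1..n} {1..n}"
      unfolding bij_betw_def using inj img endo_inj_surj[OF _ img inj] by simp
  next
    fix x assume "x \<notin> {1..n}"
    then show "par n p x = x" unfolding par_def by auto
  qed
  show "app n (par n p) (p (Suc n)) = p"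
  proof
    fix i
    show "app n (par n p) (p (Suc n)) i = p i"
    proof (cases "i \<in> {1..n}")
      case True
      then show ?thesis using ne[OF True] unfolding par_def by (auto simp: sh_def)
    next
      case False
      show ?thesis
      proof (cases "i = Suc n")
        case True then show ?thesis by simp
      next
        case F2: False
        then have "i \<notin> {1..Suc n}" using False by auto
        then show ?thesis using False F2 permutes_not_in[OF p \<open>i \<notin> {1..Suc n}\<close>]
          by (simp add: app_def del: atLeastAtMost_iff)
      qed
    qed
  qed
qed


definition inB :: "(nat \<Rightarrow> nat) \<Rightarrow> nat \<Rightarrow> nat \<Rightarrow> bool" where
  "inB q n v \<longleftrightarrow> v = Suc n \<or> (\<exists>k\<in>{1..<n}. q k = v \<and> q k < q (Suc k))"

lemma plf_app:
  assumes q: "q permutes {1..n}" and i: "i \<in> {1..n}" and v: "1 \<le> v"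
  shows "plf (app n q v) i \<longleftrightarrow> plf q i \<and> q i \<noteq> v"
proof -
  have qi: "1 \<le> q i" using i permutes_in_image[OF q] by auto
  have a1: "app n q v i = 1 \<longleftrightarrow> q i = 1 \<and> v \<noteq> 1" using i sh_one[OF qi v] by simp
  have a2: "(\<exists>j\<in>{1..<i}. app n q v j + 1 = app n q v i) \<longleftrightarrow> (\<exists>j\<in>{1..<i}. q j + 1 = q i \<and> q i \<noteq> v)"
  proof -
    have "app n q v j + 1 = app n q v i \<longleftrightarrow> q j + 1 = q i \<and> q i \<noteq> v" if "j \<in> {1..<i}" for j
    proof -
      have "j \<in> {1..n}" using that i by auto
      then show ?thesis using i sh_pred by simp
    qed
    then show ?thesis by blast
  qed
  show ?thesis unfolding plf_def a1 a2 by auto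
qed

lemma plf_app_last:
  assumes q: "q permutes {1..n}" and v: "v \<in> {1..Suc n}"
  shows "plf (app n q v) (Suc n)"
proof (cases "v = 1")
  case True then show ?thesis unfolding plf_def by simp
next
  case False
  then have "v - 1 \<in> {1..n}" using v by auto
  then obtain j where j: "j \<in> {1..n}" "q j = v - 1" using permutes_image[OF q] by (metis imageE)
  have vv: "\<not> v \<le> v - 1" using False v by auto
  have "app n q v j + 1 = app n q v (Suc n)" using j False v vv by (simp add: sh_def)
  moreover have "j \<in> {1..<Suc n}" using j by auto
  ultimately show ?thesis unfolding plf_def by blast
qed

lemma plf_last:
  assumes q: "q permutes {1..n}" and n: "1 \<le> n"
  shows "plf q n"
proof (cases "q n = 1")
  case True then show ?thesis unfolding plf_def by simp
next
  case False
  have "q n \<in> {1..n}" using n permutes_in_image[OF q] by auto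
  then have "q n - 1 \<in> {1..n}" using False by auto
  then obtain j where j: "j \<in> {1..n}" "q j = q n - 1" using permutes_image[OF q] by (metis imageE)
  have "j \<noteq> n" using j False \<open>q n \<in> {1..n}\<close> by auto
  then have "j \<in> {1..<n}" "q j + 1 = q n" using j False \<open>q n \<in> {1..n}\<close> by auto
  then show ?thesis unfolding plf_def by blast
qed

lemma noin_app:
  assumes q: "q permutes {1..n}" and n: "1 \<le> n" and v: "v \<in> {1..Suc n}"
  shows "noin (app n q v) (Suc n) \<longleftrightarrow> noin q n \<and> inB q n v"
proof -
  let ?p = "app n q v"
  have v1: "1 \<le> v" using v by simp
  have injq: "inj q" using permutes_inj[OF q] .
  have asc_in: "?p i < ?p (Suc i) \<longleftrightarrow> q i < q (Suc i)" if "i \<in> {1..<n}" for i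
  proof -
    have "i \<in> {1..n}" "Suc i \<in> {1..n}" using that by auto
    then show ?thesis by simp
  qed
  have asc_n: "?p n < ?p (Suc n) \<longleftrightarrow> q n < v" using n by simp
  have qle: "q i \<le> n" if "i \<in> {1..n}" for i using that permutes_in_image[OF q] by auto
  show ?thesis
  proof
    assume H: "noin ?p (Suc n)"
    have H': "plf ?p i \<or> (i < Suc n \<and> ?p i < ?p (Suc i))" if "i \<in> {1..n}" for i
      using H that unfolding noin_def by auto
    have "noin q n" unfolding noin_def
    proof
      fix i assume i: "i \<in> {1..n}"
      show "plf q i \<or> (i < n \<and> q i < q (Suc i))"
      proof (cases "i = n")
        case True then show ?thesis using plf_last[OF q n] by simp
      next
        case False
        then have "i \<in> {1..<n}" using i by auto
        then show ?thesis using H'[OF i] plf_app[OF q i v1] asc_in by auto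
      qed
    qed
    moreover have "inB q n v"
    proof (cases "v = Suc n")
      case True then show ?thesis unfolding inB_def by simp
    next
      case False
      then have "v \<in> {1..n}" using v by auto
      then obtain k where k: "k \<in> {1..n}" "q k = v" using permutes_image[OF q] by (metis imageE)
      have "\<not> plf ?p k" using plf_app[OF q k(1) v1] k by simp
      then have "k < Suc n \<and> ?p k < ?p (Suc k)" using H'[OF k(1)] by simp
      moreover have "k \<noteq> n" using calculation asc_n k by auto
      ultimately have "k \<in> {1..<n}" "q k < q (Suc k)" using k asc_in by auto
      then show ?thesis unfolding inB_def using k by blast
    qed
    ultimately show "noin q n \<and> inB q n v" by blast
  next
    assume H: "noin q n \<and> inB q n v"
    show "noin ?p (Suc n)" unfolding noin_def
    proof
      fix i assume i: "i \<in> {1..Suc n}"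
      show "plf ?p i \<or> (i < Suc n \<and> ?p i < ?p (Suc i))"
      proof (cases "i = Suc n")
        case True then show ?thesis using plf_app_last[OF q v] by simp
      next
        case False
        then have i': "i \<in> {1..n}" using i by auto
        have c: "plf q i \<or> (i < n \<and> q i < q (Suc i))" using H i' unfolding noin_def by auto
        show ?thesis
        proof (cases "i < n \<and> q i < q (Suc i)")
          case True
          then show ?thesis using asc_in[of i] i' by auto
        next
          case F2: False
          then have pq: "plf q i" using c by auto
          show ?thesis
          proof (cases "q i = v")
            case False
            then show ?thesis using plf_app[OF q i' v1] pq by simp
          next
            case True
            have "v \<noteq> Suc n" using True qle[OF i'] by auto
            then obtain k where k: "k \<in> {1..<n}" "q k = v" "q k < q (Suc k)" using H unfolding inB_def by auto
            have "k = i" using injD[OF injq, of k i] k True by simp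
            then show ?thesis using F2 k by auto
          qed
        qed
      qed
    qed
  qed
qed

definition LSp :: "nat \<Rightarrow> (nat \<Rightarrow> nat) \<Rightarrow> nat \<times> nat" where
  "LSp n p = (card {k\<in>{1..<n}. p k < p (Suc k)}, card {k\<in>{1..<n}. p k < p (Suc k) \<and> p k < p n})"
definition iSp :: "nat \<Rightarrow> (nat \<Rightarrow> nat) \<Rightarrow> nat" where
  "iSp n p = card {k\<in>{1..<n}. p k < p (Suc k) \<and> p k < p (Suc n)}"
definition rnk :: "(nat \<Rightarrow> nat) \<Rightarrow> nat \<Rightarrow> nat \<Rightarrow> nat" where
  "rnk q n v = card {k\<in>{1..<n}. q k < q (Suc k) \<and> q k < v}"

lemma card_upto_Suc:
  assumes "1 \<le> n"
  shows "card {k\<in>{1..<Suc n}. P k} = card {k\<in>{1..<n}. P k} + (if P n then 1 else 0)"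
proof -
  have f: "finite {k\<in>{1..<n}. P k}" by simp
  show ?thesis
  proof (cases "P n")
    case True
    then have "{k\<in>{1..<Suc n}. P k} = insert n {k\<in>{1..<n}. P k}" using assms by auto
    then show ?thesis using True f by simp
  next
    case False
    then have "{k\<in>{1..<Suc n}. P k} = {k\<in>{1..<n}. P k}" using assms by (auto simp: less_Suc_eq)
    then show ?thesis using False by simp
  qed
qed

lemma iSp_app:
  assumes q: "q permutes {1..n}"
  shows "iSp n (app n q v) = rnk q n v"
proof -
  have "{k\<in>{1..<n}. app n q v k < app n q v (Suc k) \<and> app n q v k < app n q v (Suc n)}
      = {k\<in>{1..<n}. q k < q (Suc k) \<and> q k < v}"
  proof (rule Collect_cong)
    fix k
    show "(k \<in> {1..<n} \<and> app n q v k < app n q v (Suc k) \<and> app n q v k < app n q v (Suc n)) =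
          (k \<in> {1..<n} \<and> q k < q (Suc k) \<and> q k < v)"
    proof (cases "k \<in> {1..<n}")
      case True
      then have "k \<in> {1..n}" "Suc k \<in> {1..n}" by auto
      then show ?thesis using True by simp
    qed auto
  qed
  then show ?thesis unfolding iSp_def rnk_def by simp
qed

lemma LSp_app:
  assumes q: "q permutes {1..n}" and n: "1 \<le> n"
  shows "LSp (Suc n) (app n q v) = (fst (LSp n q) + (if q n < v then 1 else 0), rnk q n v + (if q n < v then 1 else 0))"
proof -
  let ?p = "app n q v"
  have e1: "{k\<in>{1..<n}. ?p k < ?p (Suc k)} = {k\<in>{1..<n}. q k < q (Suc k)}"
  proof (rule Collect_cong)
    fix k
    show "(k \<in> {1..<n} \<and> ?p k < ?p (Suc k)) = (k \<in> {1..<n} \<and> q k < q (Suc k))"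
    proof (cases "k \<in> {1..<n}")
      case True
      then have "k \<in> {1..n}" "Suc k \<in> {1..n}" by auto
      then show ?thesis using True by simp
    qed auto
  qed
  have e2: "{k\<in>{1..<n}. ?p k < ?p (Suc k) \<and> ?p k < ?p (Suc n)} = {k\<in>{1..<n}. q k < q (Suc k) \<and> q k < v}"
  proof (rule Collect_cong)
    fix k
    show "(k \<in> {1..<n} \<and> ?p k < ?p (Suc k) \<and> ?p k < ?p (Suc n)) = (k \<in> {1..<n} \<and> q k < q (Suc k) \<and> q k < v)"
    proof (cases "k \<in> {1..<n}")
      case True
      then have "k \<in> {1..n}" "Suc k \<in> {1..n}" by auto
      then show ?thesis using True by simp
    qed auto
  qed
  have pn: "?p n < ?p (Suc n) \<longleftrightarrow> q n < v" using n by simp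
  show ?thesis unfolding LSp_def
    using card_upto_Suc[OF n, of "\<lambda>k. ?p k < ?p (Suc k)"] card_upto_Suc[OF n, of "\<lambda>k. ?p k < ?p (Suc k) \<and> ?p k < ?p (Suc n)"]
      e1 e2 pn unfolding rnk_def by simp
qed


lemma rnk_bij:
  assumes q: "q permutes {1..n}"
  shows "bij_betw (rnk q n) {v. inB q n v} {..fst (LSp n q)}"
proof -
  let ?A = "{k\<in>{1..<n}. q k < q (Suc k)}"
  let ?B = "{v. inB q n v}"
  have injq: "inj q" using permutes_inj[OF q] .
  have qle: "q i \<le> n" if "i \<in> {1..n}" for i using that permutes_in_image[OF q] by auto
  have B: "?B = insert (Suc n) (q ` ?A)" unfolding inB_def by auto
  have fA: "finite ?A" by simp
  have nin: "Suc n \<notin> q ` ?A" using qle by fastforce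
  have cB: "card ?B = Suc (card ?A)"
  proof -
    have "card (q ` ?A) = card ?A" using card_image[OF inj_on_subset[OF injq]] by blast
    then show ?thesis unfolding B using nin fA by simp
  qed
  have Ble: "v \<le> Suc n" if "v \<in> ?B" for v using that qle unfolding B by fastforce
  have mono: "rnk q n u < rnk q n w" if u: "u \<in> ?B" and w: "w \<in> ?B" and uw: "u < w" for u w
  proof -
    have "u \<noteq> Suc n" using uw Ble[OF w] by simp
    then obtain k0 where k0: "k0 \<in> ?A" "q k0 = u" using u unfolding B by auto
    have "{k\<in>{1..<n}. q k < q (Suc k) \<and> q k < u} \<subset> {k\<in>{1..<n}. q k < q (Suc k) \<and> q k < w}"
    proof
      show "{k\<in>{1..<n}. q k < q (Suc k) \<and> q k < u} \<subseteq> {k\<in>{1..<n}. q k < q (Suc k) \<and> q k < w}" using uw by auto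
      have "k0 \<in> {k\<in>{1..<n}. q k < q (Suc k) \<and> q k < w}" "k0 \<notin> {k\<in>{1..<n}. q k < q (Suc k) \<and> q k < u}"
        using k0 uw by auto
      then show "{k\<in>{1..<n}. q k < q (Suc k) \<and> q k < u} \<noteq> {k\<in>{1..<n}. q k < q (Suc k) \<and> q k < w}" by blast
    qed
    then show ?thesis unfolding rnk_def by (intro psubset_card_mono) auto
  qed
  have inj: "inj_on (rnk q n) ?B"
  proof (rule inj_onI)
    fix u w assume uw: "u \<in> ?B" "w \<in> ?B" "rnk q n u = rnk q n w"
    show "u = w"
    proof (rule ccontr)
      assume "u \<noteq> w"
      then have "u < w \<or> w < u" by auto
      then show False using mono[OF uw(1) uw(2)] mono[OF uw(2) uw(1)] uw(3) by auto
    qed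
  qed
  have img: "rnk q n ` ?B \<subseteq> {..card ?A}"
  proof
    fix x assume "x \<in> rnk q n ` ?B"
    then obtain v where "x = rnk q n v" by blast
    moreover have "rnk q n v \<le> card ?A" unfolding rnk_def by (rule card_mono) auto
    ultimately show "x \<in> {..card ?A}" by simp
  qed
  have fB: "finite ?B" unfolding B by simp
  have "card (rnk q n ` ?B) = card {..card ?A}" using card_image[OF inj] cB by simp
  then have "rnk q n ` ?B = {..card ?A}" using img by (intro card_subset_eq) auto
  then show ?thesis unfolding bij_betw_def LSp_def using inj by simp
qed

lemma inB_range:
  assumes q: "q permutes {1..n}" and "inB q n v"
  shows "v \<in> {1..Suc n}"
proof -
  have "q i \<in> {1..n}" if "i \<in> {1..n}" for i using that permutes_in_image[OF q] by auto
  then show ?thesis using assms(2) unfolding inB_def by force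
qed

lemma permsA:
  assumes n: "1 \<le> n" and x: "x \<in> perms_no_inactive (Suc n)"
  shows "par n x \<in> perms_no_inactive n \<and> iSp n x \<le> fst (LSp n (par n x)) \<and> LSp (Suc n) x = stp (LSp n (par n x)) (iSp n x)"
proof -
  have xp: "x permutes {1..Suc n}" "noin x (Suc n)" using x unfolding perms_eq by auto
  define q where "q = par n x"
  define v where "v = x (Suc n)"
  have q: "q permutes {1..n}" and v: "v \<in> {1..Suc n}" and xe: "x = app n q v"
    using par_props[OF xp(1)] unfolding q_def v_def by auto
  have c: "noin q n" "inB q n v" using noin_app[OF q n v] xp(2) xe by auto
  have qP: "q \<in> perms_no_inactive n" using q c unfolding perms_eq by simp
  have i: "iSp n x = rnk q n v" using iSp_app[OF q] xe by simp
  have r: "rnk q n v \<le> fst (LSp n q)" using bij_betw_apply[OF rnk_bij[OF q]] c(2) by simp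
  have qle: "q i \<le> n" if "i \<in> {1..n}" for i using that permutes_in_image[OF q] by auto
  have injq: "inj q" using permutes_inj[OF q] .
  have qnv: "q n \<noteq> v"
  proof
    assume e: "q n = v"
    have "v \<noteq> Suc n" using e qle[of n] n by auto
    then obtain k where "k \<in> {1..<n}" "q k = v" using c(2) unfolding inB_def by auto
    then show False using e injD[OF injq, of k n] by auto
  qed
  have key: "q n < v \<longleftrightarrow> snd (LSp n q) \<le> rnk q n v"
  proof
    assume "q n < v"
    then show "snd (LSp n q) \<le> rnk q n v" unfolding LSp_def rnk_def snd_conv by (intro card_mono) auto
  next
    assume H: "snd (LSp n q) \<le> rnk q n v"
    show "q n < v"
    proof (rule ccontr)
      assume "\<not> q n < v"
      then have lt: "v < q n" using qnv by simp
      then have "v \<noteq> Suc n" using qle[of n] n by auto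
      then obtain k0 where k0: "k0 \<in> {1..<n}" "q k0 = v" "q k0 < q (Suc k0)" using c(2) unfolding inB_def by auto
      have "{k\<in>{1..<n}. q k < q (Suc k) \<and> q k < v} \<subset> {k\<in>{1..<n}. q k < q (Suc k) \<and> q k < q n}"
      proof
        show "{k\<in>{1..<n}. q k < q (Suc k) \<and> q k < v} \<subseteq> {k\<in>{1..<n}. q k < q (Suc k) \<and> q k < q n}" using lt by auto
        have "k0 \<in> {k\<in>{1..<n}. q k < q (Suc k) \<and> q k < q n}" "k0 \<notin> {k\<in>{1..<n}. q k < q (Suc k) \<and> q k < v}"
          using k0 lt by auto
        then show "{k\<in>{1..<n}. q k < q (Suc k) \<and> q k < v} \<noteq> {k\<in>{1..<n}. q k < q (Suc k) \<and> q k < q n}" by blast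
      qed
      then have "rnk q n v < snd (LSp n q)" unfolding rnk_def LSp_def snd_conv by (intro psubset_card_mono) auto
      then show False using H by simp
    qed
  qed
  have "LSp (Suc n) x = stp (LSp n q) (rnk q n v)"
    using LSp_app[OF q n, of v] key xe unfolding stp_def by auto
  then show ?thesis using qP i r unfolding q_def[symmetric] by simp
qed

lemma permsB:
  assumes n: "1 \<le> n" and y: "y \<in> perms_no_inactive n" and j: "j \<le> fst (LSp n y)"
  shows "\<exists>!x. x \<in> perms_no_inactive (Suc n) \<and> par n x = y \<and> iSp n x = j"
proof -
  have yp: "y permutes {1..n}" "noin y n" using y unfolding perms_eq by auto
  have bij: "bij_betw (rnk y n) {v. inB y n v} {..fst (LSp n y)}" using rnk_bij[OF yp(1)] .
  have "j \<in> rnk y n ` {v. inB y n v}" using bij j unfolding bij_betw_def by simp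
  then obtain v where v: "inB y n v" "rnk y n v = j" by auto
  have vr: "v \<in> {1..Suc n}" using inB_range[OF yp(1) v(1)] .
  have ex: "app n y v \<in> perms_no_inactive (Suc n) \<and> par n (app n y v) = y \<and> iSp n (app n y v) = j"
    using app_permutes[OF yp(1) vr] noin_app[OF yp(1) n vr] yp v par_app[OF yp(1)] iSp_app[OF yp(1)]
    unfolding perms_eq by simp
  have un: "x = app n y v" if x: "x \<in> perms_no_inactive (Suc n) \<and> par n x = y \<and> iSp n x = j" for x
  proof -
    have xp: "x permutes {1..Suc n}" "noin x (Suc n)" using x unfolding perms_eq by auto
    define w where "w = x (Suc n)"
    have pp: "x (Suc n) \<in> {1..Suc n}" "app n (par n x) (x (Suc n)) = x" using par_props[OF xp(1)] by auto
    have v': "w \<in> {1..Suc n}" using pp(1) unfolding w_def .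
    have xe: "x = app n y w" using pp(2) x unfolding w_def by simp
    have ib: "inB y n w" using noin_app[OF yp(1) n v'] xp(2) xe by simp
    have "rnk y n w = j" using iSp_app[OF yp(1), of w] xe x by simp
    then have "w = v" using bij v ib unfolding bij_betw_def inj_on_def by auto
    then show ?thesis using xe by simp
  qed
  show ?thesis using ex un by blast
qed

lemma perms_one: "perms_no_inactive 1 = {id}"
proof -
  have "noin id 1" unfolding noin_def plf_def by auto
  then show ?thesis unfolding perms_eq by auto
qed

lemma prim_one: "prim_ascent_seqs 1 = {[1]}"
proof
  show "prim_ascent_seqs 1 \<subseteq> {[1]}"
  proof
    fix x assume "x \<in> prim_ascent_seqs 1"
    then have "length x = 1" "x ! 0 = 1" unfolding prim_ascent_seqs_def ascent_seq_def by auto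
    then show "x \<in> {[1]}" by (cases x) auto
  qed
  show "{[1]} \<subseteq> prim_ascent_seqs 1"
    unfolding prim_ascent_seqs_def ascent_seq_def primitive_def by auto
qed

theorem theorem7p10:
  fixes n :: nat
  assumes "n \<ge> 1"
  shows "\<exists>f. bij_betw f (perms_no_inactive n) (prim_ascent_seqs n)"
proof -
  have b1: "bij_betw (\<lambda>_. [1::nat]) (perms_no_inactive 1) (prim_ascent_seqs 1)"
    unfolding perms_one prim_one by (simp add: bij_betw_def)
  have asc1: "asc [1] = 0" unfolding asc_def by simp
  have b2: "\<forall>x\<in>perms_no_inactive 1. LTs 1 [1] = LSp 1 x"
    unfolding perms_one LTs_def LSp_def using asc1 by simp
  have "\<exists>g. bij_betw g (perms_no_inactive n) (prim_ascent_seqs n) \<and> (\<forall>x\<in>perms_no_inactive n. LTs n (g x) = LSp n x)"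
    by (rule tree_iso[where pS = par and iS = iSp and pT = pTs and iT = iTs and st = stp, OF permsA permsB seqA seqB b1 b2 assms])
      auto
  then show ?thesis by blast
qed

end
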